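(* Let $k\ge\ell\ge0$ be integers. (1) $$\binom{k}{\ell}_{\mathbb{Z},\mathbb{N}}=\prod_{b=2}^k b^{\beta(k,\ell,b)},\qquad \beta(k,\ell,b):=\sum_{i=1}^\infty\left(\left\lfloor\frac{k}{b^i}\right\rfloor-\left\lfloor\frac{\ell}{b^i}\right\rfloor-\left\lfloor\frac{k-\ell}{b^i}\right\rfloor\right).$$ (2) For every $b\ge2$, $$\beta(k,\ell,b)=\frac{1}{b-1}\big(d_b(\ell)+d_b(k-\ell)-d_b(k)\big),$$ where $d_b(j)$ denotes the sum of the base-$b$ digits of $j$.
   Context: $\mathbb{N}=\{0,1,2,\dots\}$. For an integer $b\ge0$ and $a\in\mathbb{Z}$ define $\operatorname{ord}_b(a):=\sup\{k\in\mathbb{N}: a\mathbb{Z}\subseteq b^k\mathbb{Z}\}$ (convention $0^0=1$); thus for $b\ge2$ it is the largest $k$ with $b^k\mid a$ ($+\infty$ for $a=0$), $\operatorname{ord}_0(a)=+\infty$ if $a=0$ and $0$ otherwise, and $\operatorname{ord}_1(a)=+\infty$. For nonempty $S\subseteq\mathbb{Z}$, a $b$-ordering of $S$ is a sequence $(a_i)_{i\ge0}$ in $S$ such that for each $i\ge1$, $a_i$ attains $\min_{a'\in S}\sum_{j=0}^{i-1}\operatorname{ord}_b(a'-a_j)$; the $b$-exponent sequence is $\alpha_k(S,b):=\sum_{j=0}^{k-1}\operatorname{ord}_b(a_k-a_j)$ for any $b$-ordering (independent of the choice). For $\mathcal{T}\subseteq\mathbb{N}$ the generalized factorial is $k!_{S,\mathcal{T}}:=\prod_{b\in\mathcal{T}}b^{\alpha_k(S,b)}$,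 with conventions $b^{+\infty}=0$ for $b=0$ and $b\ge2$, $1^{+\infty}=1$, and $b^0=1$ for all $b\in\mathbb{N}$. The generalized binomial coefficient is $\binom{k}{\ell}_{S,\mathcal{T}}:=k!_{S,\mathcal{T}}/(\ell!_{S,\mathcal{T}}(k-\ell)!_{S,\mathcal{T}})$ for $0\le\ell\le k<|S|$. *)

theory Defs
  imports Complex_Main "HOL-Library.Extended_Nat"
begin

text \<open>ord_b(a) = sup {k. a Z \<subseteq> b^k Z} = sup {k. b^k dvd a} (with 0^0 = 1), valued in enat.\<close>
definition ordb :: "nat \<Rightarrow> int \<Rightarrow> enat" where
  "ordb b a = Sup (enat ` {k. (int b) ^ k dvd a})"

definition is_b_ordering :: "int set \<Rightarrow> nat \<Rightarrow> (nat \<Rightarrow> int) \<Rightarrow> bool" where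
  "is_b_ordering S b a \<longleftrightarrow> (\<forall>i. a i \<in> S) \<and>
     (\<forall>i\<ge>1. \<forall>a'\<in>S. (\<Sum>j<i. ordb b (a i - a j)) \<le> (\<Sum>j<i. ordb b (a' - a j)))"

definition alpha_seq :: "int set \<Rightarrow> nat \<Rightarrow> nat \<Rightarrow> enat" where
  "alpha_seq S b k = (let a = (SOME a. is_b_ordering S b a) in (\<Sum>j<k. ordb b (a k - a j)))"

definition epow :: "nat \<Rightarrow> enat \<Rightarrow> nat" where
  "epow b e = (case e of enat n \<Rightarrow> b ^ n | \<infinity> \<Rightarrow> (if b = 1 then 1 else 0))"

text \<open>Generalized factorial k!_{S,T} = prod_{b in T} b^{alpha_k(S,b)}: zero if some factor is
  zero, otherwise the product of the (finitely many) factors different from 1.\<close>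
definition gen_fact :: "int set \<Rightarrow> nat set \<Rightarrow> nat \<Rightarrow> nat" where
  "gen_fact S T k =
     (if \<exists>b\<in>T. epow b (alpha_seq S b k) = 0 then 0
      else \<Prod>b\<in>{b\<in>T. epow b (alpha_seq S b k) \<noteq> 1}. epow b (alpha_seq S b k))"

definition gen_binom :: "int set \<Rightarrow> nat set \<Rightarrow> nat \<Rightarrow> nat \<Rightarrow> real" where
  "gen_binom S T k l = real (gen_fact S T k) / (real (gen_fact S T l) * real (gen_fact S T (k - l)))"

definition beta :: "nat \<Rightarrow> nat \<Rightarrow> nat \<Rightarrow> real" where
  "beta k l b = (\<Sum>i. real_of_int (\<lfloor>real k / real b ^ (i+1)\<rfloor> - \<lfloor>real l / real b ^ (i+1)\<rfloor>
                    - \<lfloor>real (k - l) / real b ^ (i+1)\<rfloor>))"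

fun digsum :: "nat \<Rightarrow> nat \<Rightarrow> nat" where
  "digsum b j = (if b < 2 \<or> j = 0 then 0 else j mod b + digsum b (j div b))"

end

theory Submission
  imports Defs
begin

definition cnt :: "nat \<Rightarrow> (nat \<Rightarrow> int) \<Rightarrow> nat \<Rightarrow> nat \<Rightarrow> int \<Rightarrow> nat" where
  "cnt b a n e x = (\<Sum>j<n. if (int b)^e dvd (x - a j) then 1 else 0)"

lemma cnt_0[simp]: "cnt b a n 0 x = n"
  by (simp add: cnt_def)

lemma cnt_mono: "e \<le> e' \<Longrightarrow> cnt b a n e' x \<le> cnt b a n e x"
  unfolding cnt_def
  by (rule sum_mono) (auto dest: dvd_trans[OF le_imp_power_dvd])

lemma cnt_cong: "(int b)^e dvd (x - y) \<Longrightarrow> cnt b a n e x = cnt b a n e y"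
  unfolding cnt_def
proof (rule sum.cong[OF refl])
  fix j assume "(int b)^e dvd (x - y)"
  then have "(int b)^e dvd (x - a j) \<longleftrightarrow> (int b)^e dvd (y - a j)"
  proof -
    have e: "x - a j = (x - y) + (y - a j)" by simp
    show ?thesis by (subst e, rule dvd_add_right_iff) fact
  qed
  then show "(if (int b)^e dvd (x - a j) then 1 else 0) = (if (int b)^e dvd (y - a j) then 1 else (0::nat))" by simp
qed

lemma cnt_Suc: "cnt b a (Suc n) e x = cnt b a n e x + (if (int b)^e dvd (x - a n) then 1 else 0)"
  by (simp add: cnt_def)

lemma one_res:
  assumes "m > 0"
  shows "(\<Sum>t<m. if int m dvd q + int t then 1 else 0) = (1::nat)"
proof -
  have key: "int m dvd q + int t \<longleftrightarrow> t = nat ((-q) mod int m)" if t: "t < m" for t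
  proof -
    have "int m dvd q + int t \<longleftrightarrow> int t mod int m = (-q) mod int m"
      by (simp only: mod_eq_dvd_iff) (simp add: add.commute)
    also have "int t mod int m = int t" using t by simp
    also have "int t = (-q) mod int m \<longleftrightarrow> t = nat ((-q) mod int m)"
      using assms by auto
    finally show ?thesis .
  qed
  have "{t \<in> {..<m}. int m dvd q + int t} = {nat ((-q) mod int m)}"
  proof -
    have lt: "nat ((-q) mod int m) < m" using assms by (simp add: nat_less_iff)
    have "int m dvd q + int (nat ((-q) mod int m))" using key[OF lt] by simp
    then show ?thesis using key lt by auto
  qed
  then have "card {t \<in> {..<m}. int m dvd q + int t} = 1" by simp
  moreover have "{..<m} \<inter> {t. int m dvd q + int t} = {t \<in> {..<m}. int m dvd q + int t}" by auto
  ultimately show ?thesis by (simp add: sum.If_cases)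
qed

lemma split1:
  assumes "b > 0"
  shows "(if (int b)^e dvd d then 1 else 0) = (\<Sum>t<b. if (int b)^(Suc e) dvd (d + int t * (int b)^e) then 1 else (0::nat))"
proof (cases "(int b)^e dvd d")
  case False
  have "\<not> (int b)^(Suc e) dvd (d + int t * (int b)^e)" for t
  proof
    assume "(int b)^(Suc e) dvd (d + int t * (int b)^e)"
    then have "(int b)^e dvd (d + int t * (int b)^e)"
      by (metis dvd_mult_right power_Suc)
    then show False using False by (simp add: dvd_add_left_iff)
  qed
  then show ?thesis using False by simp
next
  case True
  then obtain q where q: "d = (int b)^e * q" by blast
  have "(int b)^(Suc e) dvd (d + int t * (int b)^e) \<longleftrightarrow> int b dvd q + int t" for t
  proof -
    have "d + int t * (int b)^e = (int b)^e * (q + int t)" using q by (simp add: algebra_simps)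
    moreover have "(int b)^(Suc e) = (int b)^e * int b" by simp
    moreover have "(int b)^e \<noteq> 0" using assms by simp
    ultimately show ?thesis using assms by simp
  qed
  then show ?thesis using True one_res[OF assms, of q] by simp
qed

lemma cnt_split:
  assumes "b > 0"
  shows "cnt b a n e x = (\<Sum>t<b. cnt b a n (Suc e) (x + int t * (int b)^e))"
  unfolding cnt_def
  apply (subst sum.swap)
  apply (rule sum.cong[OF refl])
  using split1[OF assms] by (simp add: algebra_simps)

lemma cnt_total:
  assumes "b > 0"
  shows "(\<Sum>r<b^e. cnt b a n e (int r)) = n"
  unfolding cnt_def
  apply (subst sum.swap)
  using one_res[of "b^e" "- a _"] assms by simp

lemma pow_gt: "(b::nat) \<ge> 2 \<Longrightarrow> n < b ^ n"
proof -
  assume "b \<ge> 2"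
  then have "2 ^ n \<le> b ^ n" by (simp add: power_mono)
  moreover have "n < 2 ^ n" by simp
  ultimately show ?thesis by linarith
qed

lemma exists_zero:
  assumes "b \<ge> 2"
  shows "\<exists>y. cnt b a n n y = 0"
proof (rule ccontr)
  assume "\<not> ?thesis"
  then have "\<forall>r\<in>{..<b^n}. 1 \<le> cnt b a n n (int r)" by (metis One_nat_def less_one not_le)
  then have "(\<Sum>r<b^n. (1::nat)) \<le> (\<Sum>r<b^n. cnt b a n n (int r))" by (intro sum_mono) auto
  then have "b^n \<le> n" using cnt_total[of b a n n] assms by simp
  with pow_gt[OF assms, of n] show False by simp
qed

lemma min_val:
  assumes b: "b \<ge> 2" and inv: "\<forall>x y. cnt b a n e x \<le> cnt b a n e y + 1"
    and mn: "\<forall>y. cnt b a n e x \<le> cnt b a n e y"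
  shows "cnt b a n e x = n div b^e"
proof -
  define c where "c = cnt b a n e x"
  define r0 where "r0 = nat (x mod int (b^e))"
  have bpos: "b^e > 0" using b by simp
  have r0: "r0 < b^e" using bpos by (simp add: r0_def nat_less_iff)
  have "int r0 = x mod int (b^e)" using bpos by (simp add: r0_def)
  then have "x mod int (b^e) = int r0 mod int (b^e)" by simp
  then have "int (b^e) dvd (x - int r0)" by (simp only: mod_eq_dvd_iff)
  then have "(int b)^e dvd (x - int r0)" by simp
  then have cr0: "cnt b a n e (int r0) = c" unfolding c_def by (metis cnt_cong)
  have tot: "(\<Sum>r<b^e. cnt b a n e (int r)) = n" using cnt_total[of b a n e] b by simp
  have "(\<Sum>r<b^e. c) \<le> (\<Sum>r<b^e. cnt b a n e (int r))"
  proof (rule sum_mono)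
    fix r show "c \<le> cnt b a n e (int r)" using mn unfolding c_def by blast
  qed
  then have lo: "b^e * c \<le> n" using tot by simp
  have "(\<Sum>r<b^e. cnt b a n e (int r)) < (\<Sum>r<b^e. Suc c)"
  proof (rule sum_strict_mono_ex1)
    show "\<forall>r\<in>{..<b^e}. cnt b a n e (int r) \<le> Suc c"
    proof
      fix r
      have "cnt b a n e (int r) \<le> cnt b a n e x + 1" using inv by blast
      then show "cnt b a n e (int r) \<le> Suc c" unfolding c_def by simp
    qed
    show "\<exists>r\<in>{..<b^e}. cnt b a n e (int r) < Suc c"
      using r0 cr0 by (intro bexI[of _ r0]) auto
  qed simp
  then have hi: "n < b^e * Suc c" using tot by simp
  show ?thesis using div_nat_eqI[OF lo hi] c_def by simp
qed

lemma exists_min_all: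
  assumes b: "b \<ge> 2" and inv: "\<forall>e x y. cnt b a n e x \<le> cnt b a n e y + 1"
  shows "\<exists>x. \<forall>e y. cnt b a n e x \<le> cnt b a n e y"
proof -
  define m where "m e = (LEAST v. \<exists>y. cnt b a n e y = v)" for e
  have mex: "\<exists>y. cnt b a n e y = m e" for e
    unfolding m_def by (rule LeastI_ex) blast
  have mle: "m e \<le> cnt b a n e y" for e y
    unfolding m_def by (rule Least_le) blast
  have bpos: "b > 0" using b by simp
  have step: "\<exists>t<b. cnt b a n (Suc e) (x + int t * (int b)^e) = m (Suc e)"
    if cx: "cnt b a n e x = m e" for e x
  proof (rule ccontr)
    assume nt: "\<not> ?thesis"
    obtain y where y: "cnt b a n (Suc e) y = m (Suc e)" using mex by blast
    have all: "\<forall>t<b. cnt b a n (Suc e) (x + int t * (int b)^e) = Suc (m (Suc e))"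
    proof (intro allI impI)
      fix t assume "t < b"
      then have ne: "cnt b a n (Suc e) (x + int t * (int b)^e) \<noteq> m (Suc e)"
        using nt by blast
      have le: "cnt b a n (Suc e) (x + int t * (int b)^e) \<le> cnt b a n (Suc e) y + 1"
        using inv by blast
      have ge: "m (Suc e) \<le> cnt b a n (Suc e) (x + int t * (int b)^e)" by (rule mle)
      show "cnt b a n (Suc e) (x + int t * (int b)^e) = Suc (m (Suc e))"
        using ne le ge y by linarith
    qed
    have "m e = (\<Sum>t<b. cnt b a n (Suc e) (x + int t * (int b)^e))"
      using cx cnt_split[OF bpos, of a n e x] by simp
    also have "\<dots> = b * Suc (m (Suc e))" using all by simp
    finally have me: "m e = b * Suc (m (Suc e))" .
    have "cnt b a n e y = (\<Sum>t<b. cnt b a n (Suc e) (y + int t * (int b)^e))"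
      by (rule cnt_split[OF bpos])
    also have "\<dots> < (\<Sum>t<b. Suc (m (Suc e)))"
      apply (rule sum_strict_mono_ex1)
    proof -
      show "\<forall>t\<in>{..<b}. cnt b a n (Suc e) (y + int t * (int b)^e) \<le> Suc (m (Suc e))"
      proof
        fix t
        have "cnt b a n (Suc e) (y + int t * (int b)^e) \<le> cnt b a n (Suc e) y + 1"
          using inv by blast
        then show "cnt b a n (Suc e) (y + int t * (int b)^e) \<le> Suc (m (Suc e))" using y by simp
      qed
      show "\<exists>t\<in>{..<b}. cnt b a n (Suc e) (y + int t * (int b)^e) < Suc (m (Suc e))"
        using bpos y by (intro bexI[of _ 0]) auto
    qed (simp)
    finally have "cnt b a n e y < m e" using me by simp
    with mle show False by (metis not_le)
  qed
  have ind: "\<exists>x. \<forall>e\<le>E. cnt b a n e x = m e" for E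
  proof (induction E)
    case 0
    obtain y where "cnt b a n 0 y = m 0" using mex by blast
    then show ?case by auto
  next
    case (Suc E)
    then obtain x where x: "\<forall>e\<le>E. cnt b a n e x = m e" by blast
    obtain t where t: "cnt b a n (Suc E) (x + int t * (int b)^E) = m (Suc E)"
      using step x by blast
    have "cnt b a n e (x + int t * (int b)^E) = m e" if "e \<le> Suc E" for e
    proof (cases "e = Suc E")
      case True then show ?thesis using t by simp
    next
      case False
      then have e: "e \<le> E" using that by simp
      have "(int b)^e dvd (x + int t * (int b)^E - x)"
      proof -
        have "(int b)^e dvd (int b)^E" by (rule le_imp_power_dvd[OF e])
        then have "(int b)^e dvd int t * (int b)^E" by (rule dvd_mult)
        then show ?thesis by simp
      qed
      then show ?thesis using cnt_cong x e by metis
    qed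
    then show ?case by blast
  qed
  obtain x where x: "\<forall>e\<le>n. cnt b a n e x = m e" using ind by blast
  obtain y0 where "cnt b a n n y0 = 0" using exists_zero[OF b] by blast
  then have mn0: "m n = 0" using mle[of n y0] by simp
  have "cnt b a n e x \<le> cnt b a n e y" for e y
  proof (cases "e \<le> n")
    case True then show ?thesis using x mle by simp
  next
    case False
    then have "cnt b a n e x \<le> cnt b a n n x" by (intro cnt_mono) simp
    then show ?thesis using x mn0 by simp
  qed
  then show ?thesis by blast
qed

lemma ordb_zero: "ordb b 0 = \<infinity>"
proof -
  have "inj enat" by (simp add: inj_on_def)
  then have "infinite (range enat)" by (rule range_inj_infinite)
  then show ?thesis unfolding ordb_def Sup_enat_def by simp
qed

lemma ordb_fin:
  assumes b: "b \<ge> 2" and d: "d \<noteq> 0" and M: "\<bar>d\<bar> < (int b)^M"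
  shows "ordb b d = enat (\<Sum>e\<in>{1..M}. if (int b)^e dvd d then 1 else 0)"
proof -
  define S where "S = {e. (int b)^e dvd d}"
  have SM: "S \<subseteq> {..<M}"
  proof
    fix e assume "e \<in> S"
    then have "\<bar>(int b)^e\<bar> \<le> \<bar>d\<bar>" using dvd_imp_le_int[OF d] unfolding S_def by blast
    then have "(int b)^e < (int b)^M" using M by simp
    moreover have "1 < int b" using b by simp
    ultimately show "e \<in> {..<M}" using power_less_imp_less_exp[of "int b" e M] by simp
  qed
  then have fin: "finite S" by (rule finite_subset) simp
  have S0: "0 \<in> S" unfolding S_def by simp
  have down: "e' \<in> S" if "e \<in> S" "e' \<le> e" for e e'
  proof -
    have "(int b)^e' dvd (int b)^e" using that(2) by (rule le_imp_power_dvd)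
    moreover have "(int b)^e dvd d" using that(1) unfolding S_def by simp
    ultimately show ?thesis unfolding S_def by (simp add: dvd_trans)
  qed
  define v where "v = Max S"
  have Sv: "S = {..v}"
  proof
    show "S \<subseteq> {..v}" using Max_ge[OF fin] v_def by auto
    have vS: "v \<in> S" using Max_in[OF fin] S0 v_def by blast
    show "{..v} \<subseteq> S"
    proof
      fix e assume "e \<in> {..v}" then show "e \<in> S" using down[OF vS] by simp
    qed
  qed
  have vM: "v < M" using SM Sv by auto
  have "ordb b d = Sup (enat ` {..v})" unfolding ordb_def S_def[symmetric] Sv ..
  also have "\<dots> = enat v"
  proof (rule antisym)
    show "Sup (enat ` {..v}) \<le> enat v" by (rule Sup_least) auto
    show "enat v \<le> Sup (enat ` {..v})" by (rule Sup_upper) auto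
  qed
  finally have o: "ordb b d = enat v" .
  have "(\<Sum>e\<in>{1..M}. if (int b)^e dvd d then 1 else (0::nat)) = card ({1..M} \<inter> S)"
    by (simp add: sum.If_cases S_def)
  also have "{1..M} \<inter> S = {1..v}" using Sv vM by auto
  finally show ?thesis using o by simp
qed

lemma f_eq:
  assumes b: "b \<ge> 2" and ne: "\<forall>j<n. a j \<noteq> x" and M: "\<forall>j<n. \<bar>x - a j\<bar> < (int b)^M"
  shows "(\<Sum>j<n. ordb b (x - a j)) = enat (\<Sum>e\<in>{1..M}. cnt b a n e x)"
proof -
  have "(\<Sum>j<n. ordb b (x - a j)) = (\<Sum>j<n. of_nat (\<Sum>e\<in>{1..M}. if (int b)^e dvd (x - a j) then 1 else 0))"
  proof (rule sum.cong[OF refl])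
    fix j assume "j \<in> {..<n}"
    then have j: "j < n" by simp
    have "x - a j \<noteq> 0" using ne j by auto
    from ordb_fin[OF b this M[rule_format, OF j]]
    show "ordb b (x - a j) = of_nat (\<Sum>e\<in>{1..M}. if (int b)^e dvd (x - a j) then 1 else 0)"
      by (simp add: of_nat_eq_enat)
  qed
  also have "\<dots> = of_nat (\<Sum>j<n. \<Sum>e\<in>{1..M}. if (int b)^e dvd (x - a j) then 1 else 0)"
    by (simp only: of_nat_sum)
  also have "(\<Sum>j<n. \<Sum>e\<in>{1..M}. if (int b)^e dvd (x - a j) then 1 else (0::nat)) = (\<Sum>e\<in>{1..M}. cnt b a n e x)"
    unfolding cnt_def by (rule sum.swap)
  finally show ?thesis by (simp add: of_nat_eq_enat)
qed

definition Tb :: "nat \<Rightarrow> nat \<Rightarrow> nat" where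
  "Tb b n = (\<Sum>i<n. n div b^Suc i)"

lemma Tb_pad:
  assumes b: "b \<ge> 2" and N: "n \<le> N"
  shows "(\<Sum>i<N. n div b^Suc i) = Tb b n"
proof -
  have "(\<Sum>i<N. n div b^Suc i) = (\<Sum>i<n. n div b^Suc i)"
  proof (rule sum.mono_neutral_right)
    show "\<forall>i\<in>{..<N} - {..<n}. n div b ^ Suc i = 0"
    proof
      fix i assume "i \<in> {..<N} - {..<n}"
      then have "n \<le> i" by simp
      moreover have "i < b ^ i" using pow_gt[OF b] .
      moreover have "b^i \<le> b^Suc i" by (rule power_increasing) (use b in auto)
      ultimately have "n < b ^ Suc i" by linarith
      then show "n div b ^ Suc i = 0" by (rule div_less)
    qed
  qed (use N in auto)
  then show ?thesis unfolding Tb_def .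
qed

definition ordering_ok :: "nat \<Rightarrow> (nat \<Rightarrow> int) \<Rightarrow> bool" where
  "ordering_ok b a \<longleftrightarrow> (\<forall>i\<ge>1. \<forall>a'. (\<Sum>j<i. ordb b (a i - a j)) \<le> (\<Sum>j<i. ordb b (a' - a j)))"

lemma ord_step:
  assumes b: "b \<ge> 2" and ok: "ordering_ok b a" and n: "n \<ge> 1"
    and inv: "\<forall>e x y. cnt b a n e x \<le> cnt b a n e y + 1"
  shows "(\<forall>e y. cnt b a n e (a n) \<le> cnt b a n e y) \<and> (\<forall>j<n. a j \<noteq> a n) \<and>
    (\<Sum>j<n. ordb b (a n - a j)) = enat (Tb b n)"
proof -
  obtain x0 where x0: "\<forall>e y. cnt b a n e x0 \<le> cnt b a n e y" using exists_min_all[OF b inv] by blast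
  obtain y0 where y0: "cnt b a n n y0 = 0" using exists_zero[OF b] by blast
  have c0: "cnt b a n n x0 = 0" using x0[rule_format, of n y0] y0 by simp
  have x0ne: "\<forall>j<n. a j \<noteq> x0"
  proof (intro allI impI notI)
    fix j assume j: "j < n" "a j = x0"
    have "(if (int b)^n dvd (x0 - a j) then 1 else 0) \<le> cnt b a n n x0"
      unfolding cnt_def by (rule member_le_sum) (use j in auto)
    then show False using c0 j by simp
  qed
  define D where "D = (\<Sum>j<n. \<bar>x0 - a j\<bar>) + (\<Sum>j<n. \<bar>a n - a j\<bar>)"
  define M where "M = nat D + n"
  have Dge: "\<bar>x0 - a j\<bar> \<le> D" "\<bar>a n - a j\<bar> \<le> D" if "j < n" for j
  proof -
    have "\<bar>x0 - a j\<bar> \<le> (\<Sum>j<n. \<bar>x0 - a j\<bar>)" by (rule member_le_sum) (use that in auto)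
    moreover have "\<bar>a n - a j\<bar> \<le> (\<Sum>j<n. \<bar>a n - a j\<bar>)" by (rule member_le_sum) (use that in auto)
    moreover have "0 \<le> (\<Sum>j<n. \<bar>x0 - a j\<bar>)" "0 \<le> (\<Sum>j<n. \<bar>a n - a j\<bar>)" by (auto intro: sum_nonneg)
    ultimately show "\<bar>x0 - a j\<bar> \<le> D" "\<bar>a n - a j\<bar> \<le> D" unfolding D_def by linarith+
  qed
  have DM: "D < (int b)^M"
  proof -
    have "nat D < b ^ nat D" by (rule pow_gt[OF b])
    also have "\<dots> \<le> b ^ M" using b unfolding M_def by (intro power_increasing) auto
    finally have lt: "nat D < b^M" .
    have "0 \<le> D" unfolding D_def by (intro add_nonneg_nonneg sum_nonneg) auto
    then have "D < int (b^M)" using lt by (simp only: nat_less_iff)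
    then show ?thesis by simp
  qed
  have Mx0: "\<forall>j<n. \<bar>x0 - a j\<bar> < (int b)^M"
  proof (intro allI impI)
    fix j assume "j < n" from Dge(1)[OF this] DM show "\<bar>x0 - a j\<bar> < (int b)^M" by linarith
  qed
  have Man: "\<forall>j<n. \<bar>a n - a j\<bar> < (int b)^M"
  proof (intro allI impI)
    fix j assume "j < n" from Dge(2)[OF this] DM show "\<bar>a n - a j\<bar> < (int b)^M" by linarith
  qed
  have fx0: "(\<Sum>j<n. ordb b (x0 - a j)) = enat (\<Sum>e\<in>{1..M}. cnt b a n e x0)"
    by (rule f_eq[OF b x0ne Mx0])
  have le: "(\<Sum>j<n. ordb b (a n - a j)) \<le> (\<Sum>j<n. ordb b (x0 - a j))"
    using ok n unfolding ordering_ok_def by blast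
  have anne: "\<forall>j<n. a j \<noteq> a n"
  proof (intro allI impI notI)
    fix j assume j: "j < n" "a j = a n"
    have "ordb b (a n - a j) \<le> (\<Sum>j<n. ordb b (a n - a j))"
      by (rule member_le_sum) (use j in auto)
    then have "\<infinity> \<le> enat (\<Sum>e\<in>{1..M}. cnt b a n e x0)" using le fx0 j ordb_zero by simp
    then show False by simp
  qed
  have fan: "(\<Sum>j<n. ordb b (a n - a j)) = enat (\<Sum>e\<in>{1..M}. cnt b a n e (a n))"
    by (rule f_eq[OF b]) (use anne Man in auto)
  have sle: "(\<Sum>e\<in>{1..M}. cnt b a n e (a n)) \<le> (\<Sum>e\<in>{1..M}. cnt b a n e x0)"
    using le fx0 fan by simp
  have eqM: "cnt b a n e (a n) = cnt b a n e x0" if "e \<in> {1..M}" for e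
  proof (rule ccontr)
    assume "cnt b a n e (a n) \<noteq> cnt b a n e x0"
    then have "cnt b a n e x0 < cnt b a n e (a n)" using x0[rule_format, of e "a n"] by simp
    then have "(\<Sum>e\<in>{1..M}. cnt b a n e x0) < (\<Sum>e\<in>{1..M}. cnt b a n e (a n))"
      using x0 that by (intro sum_strict_mono_ex1) auto
    then show False using sle by simp
  qed
  have Mn: "n \<le> M" "1 \<le> M" using n unfolding M_def by auto
  have mins: "cnt b a n e (a n) \<le> cnt b a n e y" for e y
  proof -
    consider "e = 0" | "e \<in> {1..M}" | "M < e" by (cases "e = 0"; cases "M < e") auto
    then show ?thesis
    proof cases
      case 1 then show ?thesis by simp
    next
      case 2 then show ?thesis using eqM[OF 2] x0[rule_format, of e y] by simp
    next
      case 3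
      have "cnt b a n e (a n) \<le> cnt b a n M (a n)" using 3 by (intro cnt_mono) simp
      also have "\<dots> = cnt b a n M x0" using eqM Mn by simp
      also have "\<dots> \<le> cnt b a n n x0" using Mn by (intro cnt_mono)
      finally show ?thesis using c0 by simp
    qed
  qed
  have "(\<Sum>e\<in>{1..M}. cnt b a n e (a n)) = (\<Sum>e\<in>{1..M}. n div b^e)"
    apply (rule sum.cong[OF refl])
    apply (rule min_val[OF b])
    using inv mins by blast+
  also have "\<dots> = (\<Sum>i<M. n div b^Suc i)"
    by (simp add: sum.atLeast1_atMost_eq)
  also have "\<dots> = Tb b n" by (rule Tb_pad[OF b Mn(1)])
  finally show ?thesis using mins anne fan by simp
qed

lemma inv_all:
  assumes b: "b \<ge> 2" and ok: "ordering_ok b a"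
  shows "\<forall>e x y. cnt b a n e x \<le> cnt b a n e y + 1"
proof (induction n)
  case 0 then show ?case by (simp add: cnt_def)
next
  case (Suc n)
  show ?case
  proof (cases "n = 0")
    case True then show ?thesis by (simp add: cnt_def)
  next
    case False
    then have mins: "\<forall>e y. cnt b a n e (a n) \<le> cnt b a n e y"
      using ord_step[OF b ok _ Suc.IH] by simp
    show ?thesis
    proof (intro allI)
      fix e x y
      show "cnt b a (Suc n) e x \<le> cnt b a (Suc n) e y + 1"
      proof (cases "(int b)^e dvd (x - a n)")
        case True
        then have "cnt b a n e x = cnt b a n e (a n)" by (rule cnt_cong)
        then have "cnt b a n e x \<le> cnt b a n e y" using mins by simp
        then show ?thesis using True by (simp add: cnt_Suc)
      next
        case False
        have "cnt b a (Suc n) e x = cnt b a n e x" using False by (simp add: cnt_Suc)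
        moreover have "cnt b a n e y \<le> cnt b a (Suc n) e y" by (simp add: cnt_Suc)
        moreover have "cnt b a n e x \<le> cnt b a n e y + 1" using Suc.IH by blast
        ultimately show ?thesis by linarith
      qed
    qed
  qed
qed

lemma alpha_val:
  assumes b: "b \<ge> 2" and ok: "ordering_ok b a"
  shows "(\<Sum>j<k. ordb b (a k - a j)) = enat (Tb b k)"
proof (cases "k = 0")
  case True then show ?thesis by (simp add: Tb_def zero_enat_def)
next
  case False
  then show ?thesis using ord_step[OF b ok _ inv_all[OF b ok]] by simp
qed

definition pickm :: "nat \<Rightarrow> (nat \<Rightarrow> int) \<Rightarrow> nat \<Rightarrow> int" where
  "pickm b g n = (SOME x. \<forall>y. (\<Sum>j<n. ordb b (x - g j)) \<le> (\<Sum>j<n. ordb b (y - g j)))"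

primrec gs :: "nat \<Rightarrow> nat \<Rightarrow> nat \<Rightarrow> int" where
  "gs b 0 = (\<lambda>_. 0)"
| "gs b (Suc n) = (gs b n)(Suc n := pickm b (gs b n) (Suc n))"

lemma exmin: "\<exists>x::int. \<forall>y. (\<phi> x :: enat) \<le> \<phi> y"
proof -
  obtain x where x: "\<phi> x = (LEAST v. \<exists>y. \<phi> y = v)"
    using LeastI_ex[of "\<lambda>v. \<exists>y. \<phi> y = v"] by blast
  have "\<phi> x \<le> \<phi> y" for y unfolding x by (rule Least_le) blast
  then show ?thesis by blast
qed

lemma gs_stable: "j \<le> n \<Longrightarrow> gs b n j = gs b j j"
proof (induction n)
  case 0 then show ?case by simp
next
  case (Suc n)
  show ?case
  proof (cases "j = Suc n")
    case True then show ?thesis by simp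
  next
    case False
    then have "j \<le> n" using Suc.prems by simp
    then show ?thesis using Suc.IH False by simp
  qed
qed

lemma ordering_exists: "\<exists>a. is_b_ordering UNIV b a"
proof
  define a where "a i = gs b i i" for i
  show "is_b_ordering UNIV b a"
    unfolding is_b_ordering_def
  proof (intro conjI allI impI ballI)
    fix i :: nat
    show "a i \<in> UNIV" by simp
  next
    fix i :: nat and a' :: int assume i: "1 \<le> i"
    then obtain n where n: "i = Suc n" by (cases i) auto
    have ai: "a i = pickm b (gs b n) (Suc n)" unfolding a_def n by simp
    have aj: "a j = gs b n j" if "j < Suc n" for j
      unfolding a_def using gs_stable[of j n b] that by simp
    have P: "\<forall>y. (\<Sum>j<Suc n. ordb b (a i - gs b n j)) \<le> (\<Sum>j<Suc n. ordb b (y - gs b n j))"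
      using someI_ex[OF exmin[of "\<lambda>x. \<Sum>j<Suc n. ordb b (x - gs b n j)"]]
      unfolding ai pickm_def by simp
    have e: "(\<Sum>j<Suc n. ordb b (x - a j)) = (\<Sum>j<Suc n. ordb b (x - gs b n j))" for x
      by (rule sum.cong[OF refl]) (simp add: aj)
    show "(\<Sum>j<i. ordb b (a i - a j)) \<le> (\<Sum>j<i. ordb b (a' - a j))"
      using P unfolding n e by blast
  qed
qed

lemma some_ordering: "is_b_ordering UNIV b (SOME a. is_b_ordering UNIV b a)"
  by (rule someI_ex[OF ordering_exists])

lemma alpha_ge2:
  assumes b: "b \<ge> 2"
  shows "alpha_seq UNIV b k = enat (Tb b k)"
proof -
  have ok: "ordering_ok b (SOME a. is_b_ordering UNIV b a)"
    using some_ordering[of b] unfolding is_b_ordering_def ordering_ok_def by blast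
  show ?thesis unfolding alpha_seq_def Let_def by (rule alpha_val[OF b ok])
qed

lemma ordb0_ne: "d \<noteq> 0 \<Longrightarrow> ordb 0 d = 0"
proof -
  assume d: "d \<noteq> 0"
  have "{e. (int 0)^e dvd d} = {0}"
  proof safe
    fix e assume "(int 0)^e dvd d"
    then show "e = 0" using d by (cases e) auto
  qed simp
  then show ?thesis unfolding ordb_def by (simp add: zero_enat_def)
qed

lemma alpha_0: "alpha_seq UNIV 0 k = 0"
proof (cases "k = 0")
  case True then show ?thesis by (simp add: alpha_seq_def)
next
  case False
  define a where "a = (SOME a. is_b_ordering UNIV 0 a)"
  have ord: "is_b_ordering UNIV 0 a" unfolding a_def by (rule some_ordering)
  define a' where "a' = 1 + (\<Sum>j<k. \<bar>a j\<bar>)"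
  have ne: "a' - a j \<noteq> 0" if "j < k" for j
  proof -
    have "\<bar>a j\<bar> \<le> (\<Sum>j<k. \<bar>a j\<bar>)" by (rule member_le_sum) (use that in auto)
    then show ?thesis unfolding a'_def by linarith
  qed
  have "(\<Sum>j<k. ordb 0 (a k - a j)) \<le> (\<Sum>j<k. ordb 0 (a' - a j))"
    using ord False unfolding is_b_ordering_def by simp
  also have "\<dots> = 0" using ne ordb0_ne by simp
  finally show ?thesis unfolding alpha_seq_def Let_def a_def[symmetric] by simp
qed

lemma Tb_big: "b > k \<Longrightarrow> Tb b k = 0"
proof -
  assume bk: "b > k"
  have "k div b ^ Suc i = 0" for i
  proof -
    have "b \<le> b ^ Suc i" using bk by simp
    then show ?thesis using bk by (intro div_less) linarith
  qed
  then show ?thesis unfolding Tb_def by simp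
qed

lemma gen_fact_eq: "gen_fact UNIV UNIV k = (\<Prod>b\<in>{2..k}. b ^ Tb b k)"
proof -
  define ep where "ep b = epow b (alpha_seq UNIV b k)" for b
  have ep: "ep b = (if b < 2 then 1 else b ^ Tb b k)" for b
  proof (cases "b < 2")
    case True
    then consider "b = 0" | "b = 1" by linarith
    then show ?thesis
    proof cases
      case 1 then show ?thesis by (simp add: ep_def alpha_0 epow_def zero_enat_def)
    next
      case 2 then show ?thesis by (simp add: ep_def epow_def split: enat.split)
    qed
  next
    case False then show ?thesis by (simp add: ep_def alpha_ge2 epow_def)
  qed
  have nz: "\<not> (\<exists>b\<in>UNIV. ep b = 0)" using ep by simp
  have sub: "{b \<in> UNIV. ep b \<noteq> 1} \<subseteq> {2..k}"
  proof
    fix b assume "b \<in> {b \<in> UNIV. ep b \<noteq> 1}"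
    then have "ep b \<noteq> 1" by simp
    then have "b \<ge> 2" "\<not> b > k" using ep Tb_big by (auto split: if_splits)
    then show "b \<in> {2..k}" by simp
  qed
  have "gen_fact UNIV UNIV k = (if \<exists>b\<in>UNIV. ep b = 0 then 0 else \<Prod>b\<in>{b \<in> UNIV. ep b \<noteq> 1}. ep b)"
    unfolding gen_fact_def ep_def ..
  also have "\<dots> = (\<Prod>b\<in>{b \<in> UNIV. ep b \<noteq> 1}. ep b)"
    using nz by (rule if_not_P)
  also have "\<dots> = (\<Prod>b\<in>{2..k}. ep b)"
    by (rule prod.mono_neutral_left) (use sub in auto)
  also have "\<dots> = (\<Prod>b\<in>{2..k}. b ^ Tb b k)"
    by (rule prod.cong[OF refl]) (simp add: ep)
  finally show ?thesis .
qed

lemma gen_fact_pad: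
  assumes "n \<le> k"
  shows "gen_fact UNIV UNIV n = (\<Prod>b\<in>{2..k}. b ^ Tb b n)"
  unfolding gen_fact_eq
  by (rule prod.mono_neutral_left) (use assms Tb_big in auto)

lemma Tb_rec:
  assumes b: "b \<ge> 2" and n: "n > 0"
  shows "Tb b n = n div b + Tb b (n div b)"
proof -
  obtain m where m: "n = Suc m" using n by (cases n) auto
  have "Tb b n = (\<Sum>i<Suc m. n div b^Suc i)" unfolding Tb_def m ..
  also have "\<dots> = n div b + (\<Sum>i<m. n div b^Suc (Suc i))"
    by (simp only: sum.lessThan_Suc_shift) simp
  also have "(\<Sum>i<m. n div b^Suc (Suc i)) = (\<Sum>i<m. (n div b) div b^Suc i)"
    by (rule sum.cong[OF refl]) (simp add: div_mult2_eq)
  also have "\<dots> = Tb b (n div b)"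
  proof (rule Tb_pad[OF b])
    have "n div b < n" using n b by simp
    then show "n div b \<le> m" using m by simp
  qed
  finally show ?thesis .
qed

lemma legendre:
  assumes b: "b \<ge> 2"
  shows "real (b - 1) * real (Tb b n) + real (digsum b n) = real n"
proof (induction n rule: less_induct)
  case (less n)
  show ?case
  proof (cases "n = 0")
    case True then show ?thesis by (simp add: Tb_def)
  next
    case False
    define q where "q = n div b"
    have qn: "q < n" using False b unfolding q_def by simp
    have IH: "real (b - 1) * real (Tb b q) + real (digsum b q) = real q" using less qn by blast
    have T: "Tb b n = q + Tb b q" using Tb_rec[OF b] False q_def by simp
    have s: "digsum b n = n mod b + digsum b q" using False b q_def by simp
    have nq: "real n = real b * real q + real (n mod b)"
      unfolding q_def by (metis div_mult_mod_eq of_nat_add of_nat_mult mult.commute)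
    have b1: "real (b - 1) = real b - 1" using b by simp
    show ?thesis using IH nq b1 unfolding T s by (simp add: algebra_simps)
  qed
qed

lemma beta_eq:
  assumes b: "b \<ge> 2" and lk: "l \<le> k"
  shows "beta k l b = real (Tb b k) - real (Tb b l) - real (Tb b (k - l))"
proof -
  define g where "g i = real_of_int (\<lfloor>real k / real b ^ (i+1)\<rfloor> - \<lfloor>real l / real b ^ (i+1)\<rfloor>
                    - \<lfloor>real (k - l) / real b ^ (i+1)\<rfloor>)" for i
  have fl: "\<lfloor>real m / real b ^ (i+1)\<rfloor> = int (m div b ^ Suc i)" for m i
  proof -
    have "real b ^ (i+1) = real (b ^ Suc i)" by simp
    then show ?thesis using floor_divide_of_nat_eq[of m "b ^ Suc i"] by simp
  qed
  have g: "g i = real (k div b ^ Suc i) - real (l div b ^ Suc i) - real ((k - l) div b ^ Suc i)" for i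
    unfolding g_def fl by simp
  have z: "g i = 0" if "i \<notin> {..<k}" for i
  proof -
    have "k < b ^ i" using that pow_gt[OF b, of i] by simp
    also have "\<dots> \<le> b ^ Suc i" by (rule power_increasing) (use b in auto)
    finally have "k < b ^ Suc i" .
    then have "k div b ^ Suc i = 0" "l div b ^ Suc i = 0" "(k - l) div b ^ Suc i = 0"
      using lk by (auto intro!: div_less)
    then show ?thesis unfolding g by simp
  qed
  have "beta k l b = suminf g" unfolding beta_def g_def ..
  also have "\<dots> = (\<Sum>i<k. g i)" by (rule suminf_finite) (use z in auto)
  also have "\<dots> = real (\<Sum>i<k. k div b ^ Suc i) - real (\<Sum>i<k. l div b ^ Suc i) - real (\<Sum>i<k. (k - l) div b ^ Suc i)"
    unfolding g by (simp add: sum_subtractf)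
  also have "\<dots> = real (Tb b k) - real (Tb b l) - real (Tb b (k - l))"
    using Tb_pad[OF b, of l k] Tb_pad[OF b, of "k - l" k] Tb_pad[OF b, of k k] lk by simp
  finally show ?thesis .
qed

theorem theorem7p4:
  fixes k l :: nat
  assumes "l \<le> k"
  shows "gen_binom (UNIV :: int set) (UNIV :: nat set) k l
           = (\<Prod>b\<in>{2..k}. real b powr beta k l b) \<and>
         (\<forall>b\<ge>2. beta k l b
           = (real (digsum b l) + real (digsum b (k - l)) - real (digsum b k)) / (real b - 1))"
proof
  have "gen_binom UNIV UNIV k l = real (\<Prod>b\<in>{2..k}. b ^ Tb b k) /
      (real (\<Prod>b\<in>{2..k}. b ^ Tb b l) * real (\<Prod>b\<in>{2..k}. b ^ Tb b (k - l)))"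
    unfolding gen_binom_def gen_fact_pad[OF assms] gen_fact_pad[OF diff_le_self[of k l]] gen_fact_eq[of k] by simp
  also have "\<dots> = (\<Prod>b\<in>{2..k}. real b ^ Tb b k / (real b ^ Tb b l * real b ^ Tb b (k - l)))"
    by (simp add: prod.distrib prod_dividef)
  also have "\<dots> = (\<Prod>b\<in>{2..k}. real b powr beta k l b)"
  proof (rule prod.cong[OF refl])
    fix b assume "b \<in> {2..k}"
    then have b: "b \<ge> 2" by simp
    then have bp: "real b > 0" by simp
    show "real b ^ Tb b k / (real b ^ Tb b l * real b ^ Tb b (k - l)) = real b powr beta k l b"
      unfolding beta_eq[OF b assms] using bp by (simp add: powr_diff powr_realpow)
  qed
  finally show "gen_binom UNIV UNIV k l = (\<Prod>b\<in>{2..k}. real b powr beta k l b)" .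
next
  show "\<forall>b\<ge>2. beta k l b
           = (real (digsum b l) + real (digsum b (k - l)) - real (digsum b k)) / (real b - 1)"
  proof (intro allI impI)
    fix b :: nat assume b: "b \<ge> 2"
    have b1: "real (b - 1) = real b - 1" "real b - 1 \<noteq> 0" using b by auto
    have L: "(real b - 1) * real (Tb b n) + real (digsum b n) = real n" for n
      using legendre[OF b, of n] b1 by simp
    have "(real b - 1) * beta k l b = real (digsum b l) + real (digsum b (k - l)) - real (digsum b k)"
      unfolding beta_eq[OF b assms] using L[of k] L[of l] L[of "k - l"] assms
      by (simp add: algebra_simps of_nat_diff)
    then show "beta k l b = (real (digsum b l) + real (digsum b (k - l)) - real (digsum b k)) / (real b - 1)"
      using b1 by (simp add: field_simps)
  qed
qed

end
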